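(* Let $0<\alpha<1$, $T>0$, $N_T$ a positive integer, $\Delta t=T/N_T$, $t_k=k\Delta t$, and let $\tilde s_i>0,\ \tilde w_i>0$ ($i=1,\dots,N_A$) satisfy $\left|t^{-\alpha}-\sum_{i=1}^{N_A}\tilde w_ie^{-\tilde s_it}\right|\le\varepsilon_0$ for all $t\in[\Delta t,T]$. Let $1\le n\le N_T$, $u\in C^2[0,t_n]$, $u^k=u(t_k)$, and $$R:={}^C_0D_t^\alpha u(t)\big|_{t=t_n}-\mathbb{D}_t^\alpha u^n.$$ Then $$|R|\le\frac{\Delta t^{2-\alpha}}{\Gamma(2-\alpha)}\Big(\frac{1-\alpha}{12}+\frac{2^{2-\alpha}}{2-\alpha}-(1+2^{-\alpha})\Big)\max_{0\le t\le t_n}|u''(t)|+\frac{\varepsilon_0\,t_{n-1}}{\Gamma(1-\alpha)}\max_{0\le t\le t_{n-1}}|u'(t)|.$$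
   Context: The Caputo derivative is ${}^C_0D_t^\alpha u(t)=\frac{1}{\Gamma(1-\alpha)}\int_0^t\frac{u'(\tau)}{(t-\tau)^\alpha}d\tau$. For a sequence $(u^k)_{k\ge0}$, the FIDR operator is $$\mathbb{D}_t^\alpha u^n=\frac{u^n-u^{n-1}}{\Delta t^\alpha\Gamma(2-\alpha)}+\frac{1}{\Gamma(1-\alpha)}\sum_{i=1}^{N_A}\tilde w_i\tilde\Psi_i^n,$$ where $\tilde\Psi_i^1=0$ and, for $n\ge2$, $\tilde\Psi_i^n=e^{-\tilde s_i\Delta t}\tilde\Psi_i^{n-1}+\frac{(u^{n-1}-u^{n-2})(1-e^{-\tilde s_i\Delta t})e^{-\tilde s_i\Delta t}}{\tilde s_i\Delta t}$. *)

theory Defs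
  imports "HOL-Analysis.Analysis"
begin

text \<open>Caputo derivative of order alpha at time t, expressed through the
  derivative function du = u' (integral over [0,t], singular at the endpoint).\<close>
definition caputo :: "real \<Rightarrow> (real \<Rightarrow> real) \<Rightarrow> real \<Rightarrow> real" where
  "caputo \<alpha> du t = 1 / Gamma (1 - \<alpha>) * integral {0..t} (\<lambda>\<tau>. du \<tau> / (t - \<tau>) powr \<alpha>)"

text \<open>History variable Psi_i^n for one node s, time step dt and sequence u.
  Psi^1 = 0; Psi^0 is not used (set to 0).\<close>
fun fidr_psi :: "real \<Rightarrow> real \<Rightarrow> (nat \<Rightarrow> real) \<Rightarrow> nat \<Rightarrow> real" where
  "fidr_psi s dt u 0 = 0"
| "fidr_psi s dt u (Suc 0) = 0"
| "fidr_psi s dt u (Suc (Suc m)) =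
     exp (- s * dt) * fidr_psi s dt u (Suc m)
     + (u (Suc m) - u m) * (1 - exp (- s * dt)) * exp (- s * dt) / (s * dt)"

definition fidr :: "real \<Rightarrow> real \<Rightarrow> nat \<Rightarrow> (nat \<Rightarrow> real) \<Rightarrow> (nat \<Rightarrow> real)
                     \<Rightarrow> (nat \<Rightarrow> real) \<Rightarrow> nat \<Rightarrow> real" where
  "fidr \<alpha> dt NA s w u n =
     (u n - u (n - 1)) / (dt powr \<alpha> * Gamma (2 - \<alpha>))
     + 1 / Gamma (1 - \<alpha>) * (\<Sum>i = 1..NA. w i * fidr_psi (s i) dt u n)"

end

theory Submission
  imports Defs
begin


lemma interp_bound:
  fixes g g1 g2 :: "real \<Rightarrow> real"
  assumes ab: "a < b" and ga: "g a = 0" and gb: "g b = 0" and gc: "continuous_on {a..b} g"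
    and d1: "\<And>x. a < x \<Longrightarrow> x < b \<Longrightarrow> (g has_real_derivative g1 x) (at x)"
    and d2: "\<And>x. a < x \<Longrightarrow> x < b \<Longrightarrow> (g1 has_real_derivative g2 x) (at x)"
    and bd: "\<And>x. a < x \<Longrightarrow> x < b \<Longrightarrow> \<bar>g2 x\<bar> \<le> M"
    and s: "a \<le> s" "s \<le> b"
  shows "\<bar>g s\<bar> \<le> M / 2 * ((s - a) * (b - s))"
proof (cases "s = a \<or> s = b")
  case True
  then show ?thesis using ga gb by auto
next
  case False
  then have s1: "a < s" "s < b" using s by auto
  define l where "l = g s / ((s - a) * (b - s))"
  define \<psi> where "\<psi> x = g x - l * ((x - a) * (b - x))" for x
  define \<psi>1 where "\<psi>1 x = g1 x - l * (a + b - 2 * x)" for x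
  have dpsi: "(\<psi> has_real_derivative \<psi>1 x) (at x)" if "a < x" "x < b" for x
    unfolding \<psi>_def \<psi>1_def
    by (rule derivative_eq_intros d1 that refl | simp add: algebra_simps)+
  have dpsi1: "(\<psi>1 has_real_derivative (g2 x + 2 * l)) (at x)" if "a < x" "x < b" for x
    unfolding \<psi>1_def
    by (rule derivative_eq_intros d2 that refl | simp add: algebra_simps)+
  have pc: "continuous_on {a..b} \<psi>"
    unfolding \<psi>_def by (intro continuous_intros gc)
  have pa: "\<psi> a = 0" and pb: "\<psi> b = 0" using ga gb by (auto simp: \<psi>_def)
  have ps: "\<psi> s = 0" using s1 by (simp add: \<psi>_def l_def)
  have dif: "\<psi> differentiable (at x)" if "a < x" "x < b" for x
    using dpsi[OF that] real_differentiable_def by blast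
  obtain z1 where z1: "a < z1" "z1 < s" "DERIV \<psi> z1 :> 0"
    using Rolle[of a s \<psi>] s1 pa ps continuous_on_subset[OF pc, of "{a..s}"] dif
    by force
  obtain z2 where z2: "s < z2" "z2 < b" "DERIV \<psi> z2 :> 0"
    using Rolle[of s b \<psi>] s1 pb ps continuous_on_subset[OF pc, of "{s..b}"] dif
    by force
  have e1: "\<psi>1 z1 = 0" using DERIV_unique[OF dpsi z1(3)] z1 s1 by auto
  have e2: "\<psi>1 z2 = 0" using DERIV_unique[OF dpsi z2(3)] z2 s1 by auto
  have c1: "continuous_on {z1..z2} \<psi>1"
    by (rule DERIV_atLeastAtMost_imp_continuous_on) (use dpsi1 z1 z2 s1 in \<open>meson less_le_trans le_less_trans\<close>)
  obtain z where z: "z1 < z" "z < z2" "DERIV \<psi>1 z :> 0"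
  proof -
    have "\<psi>1 differentiable (at x)" if "z1 < x" "x < z2" for x
      using dpsi1[of x] that z1 z2 s1 real_differentiable_def by force
    then show ?thesis using Rolle[of z1 z2 \<psi>1] e1 e2 c1 z1 z2 s1 that by force
  qed
  have "g2 z + 2 * l = 0" using DERIV_unique[OF dpsi1 z(3)] z z1 z2 s1 by auto
  then have "\<bar>l\<bar> \<le> M / 2" using bd[of z] z z1 z2 s1 by auto
  moreover have "g s = l * ((s - a) * (b - s))" using s1 by (simp add: l_def)
  moreover have "(s - a) * (b - s) > 0" using s1 by auto
  ultimately show ?thesis
    by (metis abs_mult abs_of_pos mult_right_mono less_imp_le)
qed

lemma powr_cont_right:
  fixes p c :: real
  assumes "0 < p"
  shows "continuous_on {..c} (\<lambda>\<tau>. (c - \<tau>) powr p)"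
  by (rule continuous_on_powr') (use assms in \<open>auto intro!: continuous_intros\<close>)

lemma kernel_integral:
  fixes \<alpha> a b c :: real
  assumes al: "0 < \<alpha>" "\<alpha> < 1" and ab: "a \<le> b" "b \<le> c"
  shows "((\<lambda>\<tau>. (c - \<tau>) powr (- \<alpha>)) has_integral
           ((c - a) powr (1 - \<alpha>) - (c - b) powr (1 - \<alpha>)) / (1 - \<alpha>)) {a..b}"
proof -
  define P where "P \<tau> = - ((c - \<tau>) powr (1 - \<alpha>)) / (1 - \<alpha>)" for \<tau>
  have "continuous_on {a..b} (\<lambda>\<tau>. (c - \<tau>) powr (1 - \<alpha>))"
    by (rule continuous_on_subset[OF powr_cont_right]) (use al ab in auto)
  then have "continuous_on {a..b} P"
    unfolding P_def by (intro continuous_on_divide continuous_on_minus continuous_on_const) (use al in auto)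
  moreover have "\<And>x. x \<in> {a<..<b} \<Longrightarrow> (P has_vector_derivative (c - x) powr (- \<alpha>)) (at x)"
  proof -
    fix x assume that: "x \<in> {a<..<b}"
    have cx: "c - x > 0" using that ab by auto
    have "((\<lambda>\<tau>. c - \<tau>) has_real_derivative -1) (at x)"
      by (rule derivative_eq_intros refl | simp)+
    from DERIV_fun_powr[OF this cx, of "1 - \<alpha>"]
    have "((\<lambda>\<tau>. (c - \<tau>) powr (1 - \<alpha>)) has_real_derivative
            (1 - \<alpha>) * (c - x) powr (1 - \<alpha> - 1) * -1) (at x)" by (simp only: of_nat_1)
    from DERIV_cdivide[OF DERIV_minus[OF this], of "1 - \<alpha>"]
    have "(P has_real_derivative (- ((1 - \<alpha>) * (c - x) powr (1 - \<alpha> - 1) * -1)) / (1 - \<alpha>)) (at x)"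
      unfolding P_def by simp
    moreover have "(- ((1 - \<alpha>) * (c - x) powr (1 - \<alpha> - 1) * -1)) / (1 - \<alpha>) = (c - x) powr (- \<alpha>)"
      using al by (simp add: divide_simps)
    ultimately have "(P has_real_derivative (c - x) powr (- \<alpha>)) (at x)" by (simp only:)
    then show "(P has_vector_derivative (c - x) powr (- \<alpha>)) (at x)"
      by (simp only: has_real_derivative_iff_has_vector_derivative)
  qed
  ultimately have "((\<lambda>\<tau>. (c - \<tau>) powr (- \<alpha>)) has_integral (P b - P a)) {a..b}"
    by (rule fundamental_theorem_of_calculus_interior[OF ab(1)])
  moreover have "P b - P a = ((c - a) powr (1 - \<alpha>) - (c - b) powr (1 - \<alpha>)) / (1 - \<alpha>)"
    unfolding P_def by (simp add: diff_divide_distrib)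
  ultimately show ?thesis by simp
qed

lemma powr_times_self:
  fixes y \<alpha> :: real
  assumes "0 < y"
  shows "y * y powr (- \<alpha>) = y powr (1 - \<alpha>)"
  using assms by (simp add: powr_diff powr_minus divide_inverse)

lemma core:
  fixes u du ddu :: "real \<Rightarrow> real" and \<alpha> a b c M J :: real
  assumes al: "0 < \<alpha>" "\<alpha> < 1" and ab: "a < b" "b \<le> c"
    and cu: "continuous_on {a..b} u" and cdu: "continuous_on {a..b} du"
    and d1: "\<And>x. a < x \<Longrightarrow> x < b \<Longrightarrow> (u has_real_derivative du x) (at x)"
    and d2: "\<And>x. a < x \<Longrightarrow> x < b \<Longrightarrow> (du has_real_derivative ddu x) (at x)"
    and bd: "\<And>x. a < x \<Longrightarrow> x < b \<Longrightarrow> \<bar>ddu x\<bar> \<le> M"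
    and int: "(\<lambda>\<tau>. (du \<tau> - (u b - u a) / (b - a)) * (c - \<tau>) powr (- \<alpha>)) integrable_on {a..b}"
    and J: "((\<lambda>\<tau>. (\<tau> - a) * (b - \<tau>) * (c - \<tau>) powr (- \<alpha> - 1)) has_integral J) {a..b}"
  shows "\<bar>integral {a..b} (\<lambda>\<tau>. (du \<tau> - (u b - u a) / (b - a)) * (c - \<tau>) powr (- \<alpha>))\<bar>
           \<le> M / 2 * \<alpha> * J"
proof -
  define \<delta> where "\<delta> = (u b - u a) / (b - a)"
  define g where "g \<tau> = u \<tau> - u a - (\<tau> - a) * \<delta>" for \<tau>
  define K where "K \<tau> = (c - \<tau>) powr (- \<alpha>)" for \<tau>
  define K1 where "K1 \<tau> = \<alpha> * (c - \<tau>) powr (- \<alpha> - 1)" for \<tau>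
  have ga: "g a = 0" by (simp add: g_def)
  have gb: "g b = 0" using ab by (simp add: g_def \<delta>_def)
  have gc: "continuous_on {a..b} g" unfolding g_def by (intro continuous_intros cu)
  have dg: "(g has_real_derivative (du x - \<delta>)) (at x)" if "a < x" "x < b" for x
    unfolding g_def by (rule derivative_eq_intros d1 that refl | simp)+
  have dg1: "((\<lambda>x. du x - \<delta>) has_real_derivative ddu x) (at x)" if "a < x" "x < b" for x
    by (rule derivative_eq_intros d2 that refl | simp)+
  have gbd: "\<bar>g \<tau>\<bar> \<le> M / 2 * ((\<tau> - a) * (b - \<tau>))" if "\<tau> \<in> {a..b}" for \<tau>
    using interp_bound[OF ab(1) ga gb gc dg dg1 bd] that by auto
  have dK: "(K has_real_derivative K1 x) (at x)" if "a < x" "x < b" for x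
  proof -
    have cx: "c - x > 0" using that ab by auto
    have "((\<lambda>\<tau>. c - \<tau>) has_real_derivative -1) (at x)"
      by (rule derivative_eq_intros refl | simp)+
    from DERIV_fun_powr[OF this cx, of "- \<alpha>"]
    show ?thesis unfolding K_def K1_def by (simp only: of_nat_1 mult_minus_right mult_minus_left minus_minus mult_1_right)
  qed
  define F where "F \<tau> = g \<tau> * K \<tau>" for \<tau>
  have dF: "(F has_vector_derivative ((du x - \<delta>) * K x + K1 x * g x)) (at x)" if "x \<in> {a<..<b}" for x
  proof -
    have "(F has_real_derivative ((du x - \<delta>) * K x + K1 x * g x)) (at x)"
      unfolding F_def using DERIV_mult[OF dg dK] that by auto
    then show ?thesis by (simp only: has_real_derivative_iff_has_vector_derivative)
  qed
  have Fc: "continuous_on {a..b} F"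
    unfolding continuous_on_eq_continuous_within
  proof
    fix x assume x: "x \<in> {a..b}"
    show "continuous (at x within {a..b}) F"
    proof (cases "x < c")
      case True
      have "continuous_on {..<c} K"
        unfolding K_def by (intro continuous_intros) auto
      then have "isCont K x"
        using True by (simp add: continuous_on_eq_continuous_at)
      then have "continuous (at x within {a..b}) K"
        by (rule continuous_at_imp_continuous_at_within)
      moreover have "continuous (at x within {a..b}) g"
        using gc x by (simp add: continuous_on_eq_continuous_within)
      ultimately show ?thesis unfolding F_def by (intro continuous_intros)
    next
      case False
      then have xc: "x = c" "b = c" using x ab by auto
      define B where "B \<tau> = M / 2 * (b - a) * (c - \<tau>) powr (1 - \<alpha>)" for \<tau>
      have "continuous_on {a..b} (\<lambda>\<tau>. (c - \<tau>) powr (1 - \<alpha>))"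
        by (rule continuous_on_subset[OF powr_cont_right]) (use al ab in auto)
      then have "continuous_on {a..b} B" unfolding B_def by (rule continuous_on_mult_left)
      then have "(B \<longlongrightarrow> B x) (at x within {a..b})"
        using x by (simp add: continuous_on_def)
      moreover have "B x = 0" using xc al by (simp add: B_def)
      ultimately have B0: "(B \<longlongrightarrow> 0) (at x within {a..b})" by simp
      have "norm (F \<tau>) \<le> B \<tau>" if "\<tau> \<in> {a..b}" for \<tau>
      proof (cases "\<tau> = c")
        case True
        then show ?thesis using al by (simp add: F_def K_def B_def)
      next
        case False
        then have ct: "c - \<tau> > 0" using that xc by auto
        have K0: "K \<tau> \<ge> 0" by (simp add: K_def)
        have "norm (F \<tau>) = \<bar>g \<tau>\<bar> * K \<tau>" using K0 by (simp add: F_def abs_mult)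
        also have "\<dots> \<le> M / 2 * ((\<tau> - a) * (b - \<tau>)) * K \<tau>"
          using gbd[OF that] K0 by (rule mult_right_mono)
        also have "\<dots> \<le> M / 2 * ((b - a) * (c - \<tau>)) * K \<tau>"
        proof -
          have M0: "0 \<le> M" using bd[of "(a + b) / 2"] ab by force
          have "(\<tau> - a) * (b - \<tau>) \<le> (b - a) * (c - \<tau>)"
            using that xc by (intro mult_mono) auto
          then show ?thesis using M0 K0 by (intro mult_right_mono mult_left_mono) auto
        qed
        also have "\<dots> = B \<tau>"
          using powr_times_self[OF ct, of \<alpha>] by (simp add: B_def K_def)
        finally show ?thesis .
      qed
      then have "\<forall>\<^sub>F \<tau> in at x within {a..b}. norm (F \<tau>) \<le> B \<tau>"
        by (auto simp: eventually_at_filter)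
      from Lim_null_comparison[OF this B0]
      have "(F \<longlongrightarrow> 0) (at x within {a..b})" .
      moreover have "F x = 0" using xc by (simp add: F_def K_def)
      ultimately show ?thesis by (simp add: continuous_within)
    qed
  qed
  have FTC: "((\<lambda>x. (du x - \<delta>) * K x + K1 x * g x) has_integral (F b - F a)) {a..b}"
    using fundamental_theorem_of_calculus_interior[OF _ Fc dF] ab by simp
  have Fab: "F b - F a = 0" by (simp add: F_def ga gb)
  have int1: "(\<lambda>x. (du x - \<delta>) * K x) integrable_on {a..b}"
    using int unfolding K_def \<delta>_def .
  have int2: "(\<lambda>x. K1 x * g x) integrable_on {a..b}"
    using integrable_diff[OF has_integral_integrable[OF FTC] int1] by simp
  have "integral {a..b} (\<lambda>x. (du x - \<delta>) * K x) + integral {a..b} (\<lambda>x. K1 x * g x) = 0"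
    using integral_add[OF int1 int2] integral_unique[OF FTC] Fab by simp
  then have eq: "integral {a..b} (\<lambda>x. (du x - \<delta>) * K x) = - integral {a..b} (\<lambda>x. K1 x * g x)"
    by simp
  have J2: "((\<lambda>\<tau>. M / 2 * \<alpha> * ((\<tau> - a) * (b - \<tau>) * (c - \<tau>) powr (- \<alpha> - 1))) has_integral M / 2 * \<alpha> * J) {a..b}"
    by (rule has_integral_mult_right[OF J])
  have "norm (integral {a..b} (\<lambda>x. K1 x * g x))
        \<le> integral {a..b} (\<lambda>\<tau>. M / 2 * \<alpha> * ((\<tau> - a) * (b - \<tau>) * (c - \<tau>) powr (- \<alpha> - 1)))"
  proof (rule integral_norm_bound_integral[OF int2 has_integral_integrable[OF J2]])
    fix \<tau> assume t: "\<tau> \<in> {a..b}"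
    have K10: "K1 \<tau> \<ge> 0" using al by (simp add: K1_def)
    have "norm (K1 \<tau> * g \<tau>) = K1 \<tau> * \<bar>g \<tau>\<bar>" using K10 by (simp add: abs_mult)
    also have "\<dots> \<le> K1 \<tau> * (M / 2 * ((\<tau> - a) * (b - \<tau>)))"
      using gbd[OF t] K10 by (rule mult_left_mono)
    also have "\<dots> = M / 2 * \<alpha> * ((\<tau> - a) * (b - \<tau>) * (c - \<tau>) powr (- \<alpha> - 1))"
      by (simp add: K1_def)
    finally show "norm (K1 \<tau> * g \<tau>) \<le> M / 2 * \<alpha> * ((\<tau> - a) * (b - \<tau>) * (c - \<tau>) powr (- \<alpha> - 1))" .
  qed
  then have "norm (integral {a..b} (\<lambda>x. K1 x * g x)) \<le> M / 2 * \<alpha> * J"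
    by (simp only: integral_unique[OF J2])
  then have "\<bar>integral {a..b} (\<lambda>x. (du x - \<delta>) * K x)\<bar> \<le> M / 2 * \<alpha> * J"
    using eq by simp
  then show ?thesis unfolding K_def \<delta>_def .
qed

lemma powr_forms:
  fixes y \<alpha> :: real
  assumes "0 < y"
  shows "y powr (- \<alpha>) = 1 / y powr \<alpha>"
    and "y powr (1 - \<alpha>) = y / y powr \<alpha>"
    and "y powr (2 - \<alpha>) = y ^ 2 / y powr \<alpha>"
    and "y powr (- \<alpha> - 1) = 1 / (y * y powr \<alpha>)"
proof -
  show "y powr (- \<alpha>) = 1 / y powr \<alpha>" by (simp add: powr_minus_divide)
  show "y powr (1 - \<alpha>) = y / y powr \<alpha>" using assms by (simp add: powr_diff)
  have "y powr (2::real) = y ^ 2" using assms by (simp add: powr_numeral)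
  then show "y powr (2 - \<alpha>) = y ^ 2 / y powr \<alpha>" using assms by (simp add: powr_diff)
  show "y powr (- \<alpha> - 1) = 1 / (y * y powr \<alpha>)"
    using assms by (simp add: powr_diff powr_minus_divide mult.commute)
qed

lemma dpow:
  fixes c x p :: real
  assumes "0 < c - x"
  shows "((\<lambda>\<tau>. (c - \<tau>) powr p) has_real_derivative (- p * (c - x) powr (p - 1))) (at x)"
proof -
  have "((\<lambda>\<tau>. c - \<tau>) has_real_derivative -1) (at x)"
    by (rule derivative_eq_intros refl | simp)+
  from DERIV_fun_powr[OF this assms, of p] show ?thesis by simp
qed

lemma J0_integral:
  fixes \<alpha> a b :: real
  assumes al: "0 < \<alpha>" "\<alpha> < 1" and ab: "a < b"
  shows "((\<lambda>\<tau>. (\<tau> - a) * (b - \<tau>) * (b - \<tau>) powr (- \<alpha> - 1)) has_integral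
           (b - a) powr (2 - \<alpha>) / ((1 - \<alpha>) * (2 - \<alpha>))) {a..b}"
proof -
  define P where "P \<tau> = - ((b - a) / (1 - \<alpha>)) * (b - \<tau>) powr (1 - \<alpha>)
                     + 1 / (2 - \<alpha>) * (b - \<tau>) powr (2 - \<alpha>)" for \<tau>
  have c1: "continuous_on {a..b} (\<lambda>\<tau>. (b - \<tau>) powr (1 - \<alpha>))"
    by (rule continuous_on_subset[OF powr_cont_right]) (use al ab in auto)
  have c2: "continuous_on {a..b} (\<lambda>\<tau>. (b - \<tau>) powr (2 - \<alpha>))"
    by (rule continuous_on_subset[OF powr_cont_right]) (use al ab in auto)
  have Pc: "continuous_on {a..b} P"
    unfolding P_def by (intro continuous_on_add continuous_on_mult_left c1 c2)
  have dP: "(P has_vector_derivative ((x - a) * (b - x) * (b - x) powr (- \<alpha> - 1))) (at x)"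
    if "x \<in> {a<..<b}" for x
  proof -
    have y: "0 < b - x" using that by auto
    have "(P has_real_derivative
        (- ((b - a) / (1 - \<alpha>)) * (- (1 - \<alpha>) * (b - x) powr (1 - \<alpha> - 1))
         + 1 / (2 - \<alpha>) * (- (2 - \<alpha>) * (b - x) powr (2 - \<alpha> - 1)))) (at x)"
      unfolding P_def by (intro DERIV_add DERIV_cmult dpow y)
    moreover have "- ((b - a) / (1 - \<alpha>)) * (- (1 - \<alpha>) * (b - x) powr (1 - \<alpha> - 1))
         + 1 / (2 - \<alpha>) * (- (2 - \<alpha>) * (b - x) powr (2 - \<alpha> - 1))
         = (x - a) * (b - x) * (b - x) powr (- \<alpha> - 1)"
    proof -
      have e1: "1 - \<alpha> - 1 = - \<alpha>" and e2: "2 - \<alpha> - 1 = 1 - \<alpha>" by simp_all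
      have q: "(b - x) powr \<alpha> > 0" using y by simp
      have n1: "1 - \<alpha> \<noteq> 0" and n2: "2 - \<alpha> \<noteq> 0" using al by auto
      define q where "q = (b - x) powr \<alpha>"
      have q0: "q > 0" using q by (simp add: q_def)
      have t1: "- ((b - a) / (1 - \<alpha>)) * (- (1 - \<alpha>) * (1 / q)) = (b - a) / q"
        using n1 q0 by (simp add: field_simps)
      have t2: "1 / (2 - \<alpha>) * (- (2 - \<alpha>) * ((b - x) / q)) = - ((b - x) / q)"
        using n2 q0 by (simp add: field_simps)
      have t3: "(x - a) * (b - x) * (1 / ((b - x) * q)) = (x - a) / q"
        using y q0 by (simp add: field_simps)
      show ?thesis unfolding e1 e2 powr_forms[OF y] q_def[symmetric] t1 t2 t3
        using q0 by (simp add: field_simps)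
    qed
    ultimately show ?thesis by (simp only: has_real_derivative_iff_has_vector_derivative)
  qed
  have "((\<lambda>x. (x - a) * (b - x) * (b - x) powr (- \<alpha> - 1)) has_integral (P b - P a)) {a..b}"
    using fundamental_theorem_of_calculus_interior[OF _ Pc dP] ab by simp
  moreover have "P b - P a = (b - a) powr (2 - \<alpha>) / ((1 - \<alpha>) * (2 - \<alpha>))"
  proof -
    have y: "0 < b - a" using ab by simp
    have q: "(b - a) powr \<alpha> > 0" using y by simp
    have "P b = 0" using al by (simp add: P_def)
    have n1: "1 - \<alpha> \<noteq> 0" and n2: "2 - \<alpha> \<noteq> 0" using al by auto
    define r where "r = (b - a) powr \<alpha>"
    have r0: "r > 0" using q by (simp add: r_def)
    have "P b - P a = (b - a) / (1 - \<alpha>) * ((b - a) / r) - 1 / (2 - \<alpha>) * ((b - a) ^ 2 / r)"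
      using \<open>P b = 0\<close> unfolding P_def powr_forms[OF y] r_def[symmetric] by simp
    also have "\<dots> = (b - a) ^ 2 / r / ((1 - \<alpha>) * (2 - \<alpha>))"
    proof -
      have "1 / (1 - \<alpha>) - 1 / (2 - \<alpha>) = 1 / ((1 - \<alpha>) * (2 - \<alpha>))"
        using n1 n2 by (simp add: field_simps)
      moreover have "h / (1 - \<alpha>) * (h / r) - 1 / (2 - \<alpha>) * (h ^ 2 / r)
          = h ^ 2 / r * (1 / (1 - \<alpha>) - 1 / (2 - \<alpha>))" for h
        by (simp add: right_diff_distrib power2_eq_square mult.commute)
      ultimately show ?thesis by simp
    qed
    also have "\<dots> = (b - a) powr (2 - \<alpha>) / ((1 - \<alpha>) * (2 - \<alpha>))"
      unfolding powr_forms[OF y] r_def ..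
    finally show ?thesis .
  qed
  ultimately show ?thesis by simp
qed

definition v1c :: "real \<Rightarrow> real" where
  "v1c \<alpha> = (1 / (2 - \<alpha>) - 3 / (1 - \<alpha>) - 2 / \<alpha>)
             - (4 / (2 - \<alpha>) - 6 / (1 - \<alpha>) - 2 / \<alpha>) / 2 powr \<alpha>"

lemma J1_integral:
  fixes \<alpha> a h :: real
  assumes al: "0 < \<alpha>" "\<alpha> < 1" and h: "0 < h"
  shows "((\<lambda>\<tau>. (\<tau> - a) * ((a + h) - \<tau>) * ((a + 2 * h) - \<tau>) powr (- \<alpha> - 1)) has_integral
           h ^ 2 / h powr \<alpha> * v1c \<alpha>) {a..a + h}"
proof -
  define c where "c = a + 2 * h"
  define P where "P \<tau> = 1 / (2 - \<alpha>) * (c - \<tau>) powr (2 - \<alpha>)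
                     - 3 * h / (1 - \<alpha>) * (c - \<tau>) powr (1 - \<alpha>)
                     - 2 * h ^ 2 / \<alpha> * (c - \<tau>) powr (- \<alpha>)" for \<tau>
  have n1: "1 - \<alpha> \<noteq> 0" and n2: "2 - \<alpha> \<noteq> 0" and n0: "\<alpha> \<noteq> 0" using al by auto
  have Pc: "continuous_on {a..a + h} P"
    unfolding P_def by (intro continuous_intros) (use h in \<open>auto simp: c_def\<close>)
  have dP: "(P has_vector_derivative ((x - a) * ((a + h) - x) * (c - x) powr (- \<alpha> - 1))) (at x)"
    if "x \<in> {a<..<a + h}" for x
  proof -
    have y: "0 < c - x" using that h by (auto simp: c_def)
    have "(P has_real_derivative
        (1 / (2 - \<alpha>) * (- (2 - \<alpha>) * (c - x) powr (2 - \<alpha> - 1))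
         - 3 * h / (1 - \<alpha>) * (- (1 - \<alpha>) * (c - x) powr (1 - \<alpha> - 1))
         - 2 * h ^ 2 / \<alpha> * (- (- \<alpha>) * (c - x) powr (- \<alpha> - 1)))) (at x)"
      unfolding P_def by (intro DERIV_diff DERIV_cmult dpow y)
    moreover have "1 / (2 - \<alpha>) * (- (2 - \<alpha>) * (c - x) powr (2 - \<alpha> - 1))
         - 3 * h / (1 - \<alpha>) * (- (1 - \<alpha>) * (c - x) powr (1 - \<alpha> - 1))
         - 2 * h ^ 2 / \<alpha> * (- (- \<alpha>) * (c - x) powr (- \<alpha> - 1))
         = (x - a) * ((a + h) - x) * (c - x) powr (- \<alpha> - 1)"
    proof -
      have e1: "1 - \<alpha> - 1 = - \<alpha>" and e2: "2 - \<alpha> - 1 = 1 - \<alpha>" by simp_all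
      define q where "q = (c - x) powr \<alpha>"
      have q0: "q > 0" using y by (simp add: q_def)
      have t1: "1 / (2 - \<alpha>) * (- (2 - \<alpha>) * ((c - x) / q)) = - ((c - x) / q)"
        using n2 q0 by (simp add: field_simps)
      have t2: "3 * h / (1 - \<alpha>) * (- (1 - \<alpha>) * (1 / q)) = - (3 * h / q)"
        using n1 q0 by (simp add: field_simps)
      have t3: "2 * h ^ 2 / \<alpha> * (- (- \<alpha>) * (1 / ((c - x) * q))) = 2 * h ^ 2 / ((c - x) * q)"
        using n0 q0 y by (simp add: field_simps)
      have t4: "- ((c - x) / q) - - (3 * h / q) - 2 * h ^ 2 / ((c - x) * q)
          = (x - a) * ((a + h) - x) * (1 / ((c - x) * q))"
      proof -
        have gen: "- (y / q) - - (3 * h / q) - 2 * h ^ 2 / (y * q) = (2 * h - y) * (y - h) * (1 / (y * q))"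
          if "y > 0" for y
          using that q0 by (simp add: field_simps power2_eq_square)
        have e: "x - a = 2 * h - (c - x)" "(a + h) - x = (c - x) - h" by (simp_all add: c_def)
        show ?thesis unfolding e by (rule gen[OF y])
      qed
      show ?thesis unfolding e1 e2 powr_forms[OF y] q_def[symmetric] t1 t2 t3 t4 ..
    qed
    ultimately show ?thesis by (simp only: has_real_derivative_iff_has_vector_derivative)
  qed
  have "((\<lambda>x. (x - a) * ((a + h) - x) * (c - x) powr (- \<alpha> - 1)) has_integral (P (a + h) - P a)) {a..a + h}"
    using fundamental_theorem_of_calculus_interior[OF _ Pc dP] h by simp
  moreover have "P (a + h) - P a = h ^ 2 / h powr \<alpha> * v1c \<alpha>"
  proof -
    have c1: "c - (a + h) = h" and c2: "c - a = 2 * h" by (simp_all add: c_def)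
    have h2: "0 < 2 * h" using h by simp
    define r where "r = h powr \<alpha>"
    define t where "t = 2 powr \<alpha>"
    have r0: "r > 0" using h by (simp add: r_def)
    have t0: "t > 0" by (simp add: t_def)
    have rt: "(2 * h) powr \<alpha> = t * r" using h by (simp add: r_def t_def powr_mult)
    have "P (a + h) = h ^ 2 / r * (1 / (2 - \<alpha>) - 3 / (1 - \<alpha>) - 2 / \<alpha>)"
      unfolding P_def c1 powr_forms[OF h] r_def[symmetric]
      by (simp add: divide_inverse algebra_simps power2_eq_square)
    moreover have "P a = h ^ 2 / r * ((4 / (2 - \<alpha>) - 6 / (1 - \<alpha>) - 2 / \<alpha>) / t)"
      unfolding P_def c2 powr_forms[OF h2] rt
      by (simp add: divide_inverse algebra_simps power2_eq_square)
    ultimately show ?thesis by (simp add: v1c_def r_def t_def right_diff_distrib)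
  qed
  ultimately show ?thesis by (simp add: c_def)
qed

lemma const_id:
  fixes \<alpha> :: real
  assumes al: "0 < \<alpha>" "\<alpha> < 1"
  shows "\<alpha> / 2 * (1 / ((1 - \<alpha>) * (2 - \<alpha>)) + v1c \<alpha>)
         = (4 / 2 powr \<alpha> / (2 - \<alpha>) - 1 - 1 / 2 powr \<alpha>) / (1 - \<alpha>)"
proof -
  define t where "t = 2 powr \<alpha>"
  have t0: "t > 0" by (simp add: t_def)
  define i1 where "i1 = 1 / (1 - \<alpha>)"
  define i2 where "i2 = 1 / (2 - \<alpha>)"
  define i0 where "i0 = 1 / \<alpha>"
  define it where "it = 1 / t"
  have h1: "i1 * (1 - \<alpha>) = 1" using al by (simp add: i1_def)
  have h2: "i2 * (2 - \<alpha>) = 1" using al by (simp add: i2_def)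
  have h0: "i0 * \<alpha> = 1" using al by (simp add: i0_def)
  have ht: "it * t = 1" using t0 by (simp add: it_def)
  have "\<alpha> / 2 * (i1 * i2 + ((i2 - 3 * i1 - 2 * i0) - (4 * i2 - 6 * i1 - 2 * i0) * it))
        = (4 * it * i2 - 1 - it) * i1"
    using h1 h2 h0 ht by algebra
  moreover have "1 / ((1 - \<alpha>) * (2 - \<alpha>)) = i1 * i2" by (simp add: i1_def i2_def)
  moreover have "v1c \<alpha> = (i2 - 3 * i1 - 2 * i0) - (4 * i2 - 6 * i1 - 2 * i0) * it"
    by (simp add: v1c_def i1_def i2_def i0_def it_def t_def divide_inverse)
  moreover have "(4 / 2 powr \<alpha> / (2 - \<alpha>) - 1 - 1 / 2 powr \<alpha>) / (1 - \<alpha>) = (4 * it * i2 - 1 - it) * i1"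
    by (simp add: i1_def i2_def it_def t_def divide_inverse)
  ultimately show ?thesis by simp
qed

lemma J3_bound:
  fixes \<alpha> a b c :: real
  assumes al: "0 < \<alpha>" "\<alpha> < 1" and ab: "a < b" "b < c"
  shows "(\<lambda>\<tau>. (\<tau> - a) * (b - \<tau>) * (c - \<tau>) powr (- \<alpha> - 1)) integrable_on {a..b}"
    and "integral {a..b} (\<lambda>\<tau>. (\<tau> - a) * (b - \<tau>) * (c - \<tau>) powr (- \<alpha> - 1))
           \<le> (c - b) powr (- \<alpha> - 1) * (b - a) ^ 3 / 6"
proof -
  have ct: "continuous_on {a..b} (\<lambda>\<tau>. (\<tau> - a) * (b - \<tau>) * (c - \<tau>) powr (- \<alpha> - 1))"
    by (intro continuous_intros) (use ab in auto)
  show i1: "(\<lambda>\<tau>. (\<tau> - a) * (b - \<tau>) * (c - \<tau>) powr (- \<alpha> - 1)) integrable_on {a..b}"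
    by (rule integrable_continuous_interval[OF ct])
  define P where "P \<tau> = - (\<tau> ^ 3 / 3) + (a + b) * \<tau> ^ 2 / 2 - a * b * \<tau>" for \<tau>
  have "((\<lambda>\<tau>. (\<tau> - a) * (b - \<tau>)) has_integral (P b - P a)) {a..b}"
  proof (rule fundamental_theorem_of_calculus_interior)
    show "a \<le> b" using ab by simp
    show "continuous_on {a..b} P" unfolding P_def by (intro continuous_intros) auto
    fix x
    have "(P has_real_derivative (x - a) * (b - x)) (at x)"
      unfolding P_def by (rule derivative_eq_intros refl | simp add: algebra_simps power2_eq_square)+
    then show "(P has_vector_derivative (x - a) * (b - x)) (at x)"
      by (simp only: has_real_derivative_iff_has_vector_derivative)
  qed
  moreover have "P b - P a = (b - a) ^ 3 / 6"
    by (simp add: P_def power3_eq_cube power2_eq_square field_simps)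
  ultimately have q: "((\<lambda>\<tau>. (\<tau> - a) * (b - \<tau>)) has_integral (b - a) ^ 3 / 6) {a..b}" by simp
  have q2: "((\<lambda>\<tau>. (c - b) powr (- \<alpha> - 1) * ((\<tau> - a) * (b - \<tau>))) has_integral
             (c - b) powr (- \<alpha> - 1) * ((b - a) ^ 3 / 6)) {a..b}"
    by (rule has_integral_mult_right[OF q])
  have "integral {a..b} (\<lambda>\<tau>. (\<tau> - a) * (b - \<tau>) * (c - \<tau>) powr (- \<alpha> - 1))
        \<le> integral {a..b} (\<lambda>\<tau>. (c - b) powr (- \<alpha> - 1) * ((\<tau> - a) * (b - \<tau>)))"
  proof (rule integral_le[OF i1 has_integral_integrable[OF q2]])
    fix x assume x: "x \<in> {a..b}"
    have "(c - x) powr (- \<alpha> - 1) \<le> (c - b) powr (- \<alpha> - 1)"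
      by (rule powr_mono2') (use x ab al in auto)
    moreover have "0 \<le> (x - a) * (b - x)" using x by auto
    ultimately show "(x - a) * (b - x) * (c - x) powr (- \<alpha> - 1) \<le> (c - b) powr (- \<alpha> - 1) * ((x - a) * (b - x))"
      by (simp add: mult.commute mult_left_mono)
  qed
  then show "integral {a..b} (\<lambda>\<tau>. (\<tau> - a) * (b - \<tau>) * (c - \<tau>) powr (- \<alpha> - 1))
           \<le> (c - b) powr (- \<alpha> - 1) * (b - a) ^ 3 / 6"
    unfolding integral_unique[OF q2] by simp
qed

lemma step_ineq:
  fixes \<alpha> x :: real
  assumes al: "0 < \<alpha>" and x: "1 \<le> x"
  shows "\<alpha> * (x + 1) powr (- \<alpha> - 1) \<le> x powr (- \<alpha>) - (x + 1) powr (- \<alpha>)"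
proof -
  have "\<exists>z. x < z \<and> z < x + 1 \<and> ((x + 1) powr (- \<alpha>) - x powr (- \<alpha>) = (x + 1 - x) * (- \<alpha> * z powr (- \<alpha> - 1)))"
  proof (rule MVT2)
    fix y assume "x \<le> y" "y \<le> x + 1"
    then have "y > 0" using x by auto
    then show "((\<lambda>y. y powr (- \<alpha>)) has_real_derivative (- \<alpha> * y powr (- \<alpha> - 1))) (at y)"
      using has_real_derivative_powr[of y "- \<alpha>"] by simp
  qed simp
  then obtain z where z: "x < z" "z < x + 1" "x powr (- \<alpha>) - (x + 1) powr (- \<alpha>) = \<alpha> * z powr (- \<alpha> - 1)"
    by (auto simp: algebra_simps)
  have "(x + 1) powr (- \<alpha> - 1) \<le> z powr (- \<alpha> - 1)"
    by (rule powr_mono2') (use z x al in auto)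
  then show ?thesis using z al by (simp add: mult_left_mono)
qed

lemma tail_sum:
  fixes \<alpha> :: real
  assumes al: "0 < \<alpha>"
  shows "(\<Sum>i<N. \<alpha> * (real i + 2) powr (- \<alpha> - 1)) \<le> 1 - (real N + 1) powr (- \<alpha>)"
proof (induction N)
  case 0
  then show ?case by simp
next
  case (Suc N)
  have "\<alpha> * (real N + 2) powr (- \<alpha> - 1) \<le> (real N + 1) powr (- \<alpha>) - (real N + 2) powr (- \<alpha>)"
    using step_ineq[OF al, of "real N + 1"] by (simp add: add.assoc)
  then show ?case using Suc by (simp add: add.commute add.left_commute)
qed

lemma tail_sum1:
  fixes \<alpha> :: real
  assumes al: "0 < \<alpha>"
  shows "(\<Sum>i<N. \<alpha> * (real i + 2) powr (- \<alpha> - 1)) \<le> 1"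
  using tail_sum[OF al, of N] by (smt (verit) powr_ge_zero)

lemma psi_closed:
  "fidr_psi s dt U (Suc m) =
     (\<Sum>j<m. (U (Suc j) - U j) * (1 - exp (- s * dt)) * exp (- s * dt) ^ (m - j) / (s * dt))"
proof (induction m)
  case 0
  then show ?case by simp
next
  case (Suc m)
  have "fidr_psi s dt U (Suc (Suc m)) = exp (- s * dt) * fidr_psi s dt U (Suc m)
     + (U (Suc m) - U m) * (1 - exp (- s * dt)) * exp (- s * dt) / (s * dt)" by simp
  also have "exp (- s * dt) * fidr_psi s dt U (Suc m) =
     (\<Sum>j<m. (U (Suc j) - U j) * (1 - exp (- s * dt)) * exp (- s * dt) ^ (Suc m - j) / (s * dt))"
    unfolding Suc sum_distrib_left
  proof (rule sum.cong[OF refl])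
    fix j assume "j \<in> {..<m}"
    then have "Suc m - j = Suc (m - j)" by auto
    then show "exp (- s * dt) * ((U (Suc j) - U j) * (1 - exp (- s * dt)) * exp (- s * dt) ^ (m - j) / (s * dt)) =
         (U (Suc j) - U j) * (1 - exp (- s * dt)) * exp (- s * dt) ^ (Suc m - j) / (s * dt)"
      by (simp add: algebra_simps)
  qed
  finally show ?case by simp
qed

lemma exp_integral:
  fixes s a b c :: real
  assumes "0 < s" "a \<le> b"
  shows "((\<lambda>\<tau>. exp (- s * (c - \<tau>))) has_integral (exp (- s * (c - b)) - exp (- s * (c - a))) / s) {a..b}"
proof -
  define P where "P \<tau> = exp (- s * (c - \<tau>)) / s" for \<tau>
  have "((\<lambda>\<tau>. exp (- s * (c - \<tau>))) has_integral (P b - P a)) {a..b}"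
  proof (rule fundamental_theorem_of_calculus_interior)
    show "a \<le> b" using assms by simp
    show "continuous_on {a..b} P" unfolding P_def by (intro continuous_intros) (use assms in auto)
    fix x
    have "(P has_real_derivative exp (- s * (c - x))) (at x)"
      unfolding P_def using assms by (auto intro!: derivative_eq_intros)
    then show "(P has_vector_derivative exp (- s * (c - x))) (at x)"
      by (simp only: has_real_derivative_iff_has_vector_derivative)
  qed
  moreover have "P b - P a = (exp (- s * (c - b)) - exp (- s * (c - a))) / s"
    by (simp add: P_def diff_divide_distrib)
  ultimately show ?thesis by simp
qed

lemma integral_split_sum:
  fixes f :: "real \<Rightarrow> real" and h :: real
  assumes h: "0 \<le> h" and f: "f integrable_on {0..real m * h}"
  shows "integral {0..real m * h} f = (\<Sum>j<m. integral {real j * h..real (Suc j) * h} f)"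
  using f
proof (induction m)
  case 0
  then show ?case by simp
next
  case (Suc m)
  have le: "real m * h \<le> real (Suc m) * h" using h by (simp add: mult_right_mono)
  have i: "f integrable_on {0..real m * h}"
    by (rule integrable_on_subinterval[OF Suc.prems]) (use le in auto)
  have "integral {0..real (Suc m) * h} f = integral {0..real m * h} f + integral {real m * h..real (Suc m) * h} f"
    using Henstock_Kurzweil_Integration.integral_combine[OF _ le Suc.prems, symmetric] h by simp
  then show ?case using Suc.IH[OF i] by simp
qed



theorem theorem7:
  fixes \<alpha> T \<epsilon>0 :: real and NT NA n :: nat
    and s w :: "nat \<Rightarrow> real" and u du ddu :: "real \<Rightarrow> real"
  defines "dt \<equiv> T / real NT"
  assumes "0 < \<alpha>" and "\<alpha> < 1" and "0 < T" and "0 < NT"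
    and "\<forall>i\<in>{1..NA}. 0 < s i \<and> 0 < w i"
    and "\<forall>t\<in>{dt..T}. \<bar>t powr (- \<alpha>) - (\<Sum>i = 1..NA. w i * exp (- s i * t))\<bar> \<le> \<epsilon>0"
    and "1 \<le> n" and "n \<le> NT"
    and "\<forall>x\<in>{0..real n * dt}. (u has_real_derivative du x) (at x within {0..real n * dt})"
    and "\<forall>x\<in>{0..real n * dt}. (du has_real_derivative ddu x) (at x within {0..real n * dt})"
    and "continuous_on {0..real n * dt} ddu"
  shows "\<bar>caputo \<alpha> du (real n * dt) - fidr \<alpha> dt NA s w (\<lambda>k. u (real k * dt)) n\<bar>
    \<le> dt powr (2 - \<alpha>) / Gamma (2 - \<alpha>)
        * ((1 - \<alpha>) / 12 + 2 powr (2 - \<alpha>) / (2 - \<alpha>) - (1 + 2 powr (- \<alpha>)))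
        * (SUP t\<in>{0..real n * dt}. \<bar>ddu t\<bar>)
      + \<epsilon>0 * (real (n - 1) * dt) / Gamma (1 - \<alpha>)
        * (SUP t\<in>{0..real (n - 1) * dt}. \<bar>du t\<bar>)"
proof -
  note al = \<open>0 < \<alpha>\<close> \<open>\<alpha> < 1\<close>
  note sw = \<open>\<forall>i\<in>{1..NA}. 0 < s i \<and> 0 < w i\<close>
  note apx = \<open>\<forall>t\<in>{dt..T}. \<bar>t powr (- \<alpha>) - (\<Sum>i = 1..NA. w i * exp (- s i * t))\<bar> \<le> \<epsilon>0\<close>
  note du1 = \<open>\<forall>x\<in>{0..real n * dt}. (u has_real_derivative du x) (at x within {0..real n * dt})\<close>
  note du2 = \<open>\<forall>x\<in>{0..real n * dt}. (du has_real_derivative ddu x) (at x within {0..real n * dt})\<close>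
  note cddu = \<open>continuous_on {0..real n * dt} ddu\<close>
  obtain m where nm: "n = Suc m" using \<open>1 \<le> n\<close> by (cases n) auto
  have h0: "0 < dt" using \<open>0 < T\<close> \<open>0 < NT\<close> by (simp add: dt_def)
  have dtT: "dt \<le> T" using \<open>0 < T\<close> \<open>0 < NT\<close> by (simp add: dt_def field_simps)
  define c where "c = real n * dt"
  have cT: "c \<le> T"
  proof -
    have "real n * dt \<le> real NT * dt" using \<open>n \<le> NT\<close> h0 by (simp add: mult_right_mono)
    also have "\<dots> = T" using \<open>0 < NT\<close> by (simp add: dt_def)
    finally show ?thesis by (simp add: c_def)
  qed
  define a where "a j = real j * dt" for j :: nat
  define b where "b j = real (Suc j) * dt" for j :: nat
  have ba: "b j - a j = dt" for j by (simp add: a_def b_def algebra_simps)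
  have ab: "a j < b j" for j using ba[of j] h0 by simp
  define K where "K \<tau> = (c - \<tau>) powr (- \<alpha>)" for \<tau>
  define G1 where "G1 = Gamma (1 - \<alpha>)"
  have G1: "G1 > 0" using al by (simp add: G1_def Gamma_real_pos)
  have G2: "Gamma (2 - \<alpha>) = (1 - \<alpha>) * G1"
  proof -
    have "1 - \<alpha> \<notin> \<int>\<^sub>\<le>\<^sub>0" using al nonpos_Ints_nonpos by force
    then show ?thesis using Gamma_plus1[of "1 - \<alpha>"] by (simp add: G1_def)
  qed
  define M where "M = (SUP t\<in>{0..real n * dt}. \<bar>ddu t\<bar>)"
  define B1 where "B1 = (SUP t\<in>{0..real (n - 1) * dt}. \<bar>du t\<bar>)"
  have cu: "continuous_on {0..c} u"
    unfolding c_def by (rule DERIV_continuous_on) (use du1 in blast)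
  have cdu: "continuous_on {0..c} du"
    unfolding c_def by (rule DERIV_continuous_on) (use du2 in blast)
  have intr: "interior {0..c} = {0<..<c}" by simp
  have du1a: "(u has_real_derivative du x) (at x)" if "0 < x" "x < c" for x
  proof -
    have "(u has_real_derivative du x) (at x within {0..c})" using du1 that by (auto simp: c_def)
    moreover have "at x within {0..c} = at x" using that by (intro at_within_interior) (simp add: intr)
    ultimately show ?thesis by simp
  qed
  have du2a: "(du has_real_derivative ddu x) (at x)" if "0 < x" "x < c" for x
  proof -
    have "(du has_real_derivative ddu x) (at x within {0..c})" using du2 that by (auto simp: c_def)
    moreover have "at x within {0..c} = at x" using that by (intro at_within_interior) (simp add: intr)
    ultimately show ?thesis by simp
  qed
  have Mb: "\<bar>ddu x\<bar> \<le> M" if "x \<in> {0..c}" for x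
  proof -
    have "continuous_on {0..c} (\<lambda>t. \<bar>ddu t\<bar>)" using cddu by (intro continuous_intros) (simp add: c_def)
    then have "bounded ((\<lambda>t. \<bar>ddu t\<bar>) ` {0..c})"
      by (intro compact_imp_bounded compact_continuous_image) auto
    then have "bdd_above ((\<lambda>t. \<bar>ddu t\<bar>) ` {0..c})" by (rule bounded_imp_bdd_above)
    then show ?thesis unfolding M_def c_def[symmetric] using that by (rule cSUP_upper2) simp
  qed
  have M0: "0 \<le> M" using Mb[of 0] h0 by (auto simp: c_def)
  have mc: "real m * dt \<le> c" using h0 by (simp add: c_def nm)
  have B1b: "\<bar>du x\<bar> \<le> B1" if "x \<in> {0..real m * dt}" for x
  proof -
    have "continuous_on {0..real m * dt} (\<lambda>t. \<bar>du t\<bar>)"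
      by (intro continuous_intros continuous_on_subset[OF cdu]) (use mc in auto)
    then have "bounded ((\<lambda>t. \<bar>du t\<bar>) ` {0..real m * dt})"
      by (intro compact_imp_bounded compact_continuous_image) auto
    then have "bdd_above ((\<lambda>t. \<bar>du t\<bar>) ` {0..real m * dt})" by (rule bounded_imp_bdd_above)
    then show ?thesis unfolding B1_def nm using that by (simp add: cSUP_upper2)
  qed
  have e0: "0 \<le> \<epsilon>0" using apx dtT by (metis abs_ge_zero atLeastAtMost_iff order.refl order_trans)
  have c0: "0 \<le> c" using h0 by (simp add: c_def)
  have Kint: "(K has_integral ((c - 0) powr (1 - \<alpha>) - (c - c) powr (1 - \<alpha>)) / (1 - \<alpha>)) {0..c}"
    unfolding K_def by (rule kernel_integral[OF al c0 order.refl])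
  have Kabs: "K absolutely_integrable_on {0..c}"
    by (rule nonnegative_absolutely_integrable_1[OF has_integral_integrable[OF Kint]]) (simp add: K_def)
  have duKabs: "(\<lambda>\<tau>. du \<tau> * K \<tau>) absolutely_integrable_on {0..c}"
  proof (rule absolutely_integrable_bounded_measurable_product_real)
    show "du \<in> borel_measurable (lebesgue_on {0..c})"
      by (rule continuous_imp_measurable_on_sets_lebesgue[OF cdu]) simp
    show "{0..c} \<in> sets lebesgue" by simp
    show "bounded (du ` {0..c})" by (intro compact_imp_bounded compact_continuous_image cdu) simp
  qed (rule Kabs)
  have duKint: "(\<lambda>\<tau>. du \<tau> * K \<tau>) integrable_on {0..c}"
    using duKabs by (simp add: absolutely_integrable_on_def)
  have Kint': "K integrable_on {0..c}" using Kint by blast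
  have sub: "{a j..b j} \<subseteq> {0..c}" if "j < n" for j
  proof -
    have "real (Suc j) \<le> real n" using that by simp
    then have "b j \<le> c" using h0 by (simp add: b_def c_def mult_right_mono)
    moreover have "0 \<le> a j" using h0 by (simp add: a_def)
    ultimately show ?thesis by auto
  qed
  define D where "D j = (u (b j) - u (a j)) / (b j - a j)" for j
  define E where "E j = integral {a j..b j} (\<lambda>\<tau>. (du \<tau> - D j) * K \<tau>)" for j
  define IK where "IK j = integral {a j..b j} K" for j
  have piece: "integral {a j..b j} (\<lambda>\<tau>. du \<tau> * K \<tau>) = E j + D j * IK j" if "j < n" for j
  proof -
    have i1: "(\<lambda>\<tau>. du \<tau> * K \<tau>) integrable_on {a j..b j}"
      by (rule integrable_on_subinterval[OF duKint sub[OF that]])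
    have i2: "K integrable_on {a j..b j}"
      by (rule integrable_on_subinterval[OF Kint' sub[OF that]])
    have "E j = integral {a j..b j} (\<lambda>\<tau>. du \<tau> * K \<tau> - D j * K \<tau>)"
      unfolding E_def by (simp add: algebra_simps)
    also have "\<dots> = integral {a j..b j} (\<lambda>\<tau>. du \<tau> * K \<tau>) - D j * IK j"
      unfolding IK_def using integral_diff[OF i1 integrable_on_mult_right[OF i2]] by simp
    finally show ?thesis by simp
  qed
  have capG: "G1 * caputo \<alpha> du (real n * dt) = (\<Sum>j<n. E j) + (\<Sum>j<n. D j * IK j)"
  proof -
    have "(\<lambda>\<tau>. du \<tau> / (real n * dt - \<tau>) powr \<alpha>) = (\<lambda>\<tau>. du \<tau> * K \<tau>)"
      by (simp add: K_def c_def powr_minus_divide divide_inverse)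
    then have "G1 * caputo \<alpha> du (real n * dt) = integral {0..c} (\<lambda>\<tau>. du \<tau> * K \<tau>)"
      using G1 by (simp add: caputo_def G1_def c_def)
    also have "\<dots> = (\<Sum>j<n. integral {a j..b j} (\<lambda>\<tau>. du \<tau> * K \<tau>))"
      unfolding c_def a_def b_def by (rule integral_split_sum) (use h0 duKint c_def in auto)
    also have "\<dots> = (\<Sum>j<n. E j + D j * IK j)" by (rule sum.cong) (simp_all add: piece)
    finally show ?thesis by (simp add: sum.distrib)
  qed
  define U where "U k = u (real k * dt)" for k :: nat
  define IS where "IS j = (\<Sum>i = 1..NA. w i * (exp (- s i * (c - b j)) - exp (- s i * (c - a j))) / s i)" for j
  have Dd: "D j = (U (Suc j) - U j) / dt" for j unfolding D_def ba by (simp add: U_def a_def b_def)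
  have cbm: "c - b m = 0" and cam: "c - a m = dt"
    by (simp_all add: c_def b_def a_def nm algebra_simps)
  have IKm: "IK m = dt / dt powr \<alpha> / (1 - \<alpha>)"
  proof -
    have "b m \<le> c" using cbm by simp
    from kernel_integral[OF al less_imp_le[OF ab[of m]] this]
    have "IK m = ((c - a m) powr (1 - \<alpha>) - (c - b m) powr (1 - \<alpha>)) / (1 - \<alpha>)"
      unfolding IK_def K_def by (rule integral_unique)
    then show ?thesis using cbm cam powr_forms(2)[OF h0, of \<alpha>] al by simp
  qed
  have part1: "G1 * ((U n - U (n - 1)) / (dt powr \<alpha> * Gamma (2 - \<alpha>))) = D m * IK m"
  proof -
    have r: "dt powr \<alpha> > 0" using h0 by simp
    have n1: "1 - \<alpha> \<noteq> 0" using al by simp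
    show ?thesis unfolding G2 IKm Dd nm using G1 h0 r n1 by (simp add: field_simps)
  qed
  have part2: "(\<Sum>i = 1..NA. w i * fidr_psi (s i) dt U n) = (\<Sum>j<m. D j * IS j)"
  proof -
    have eb: "c - b j = real (m - j) * dt" if "j < m" for j
      using that by (simp add: c_def b_def nm of_nat_diff algebra_simps)
    have ea: "c - a j = real (Suc (m - j)) * dt" if "j < m" for j
      using that by (simp add: c_def a_def nm of_nat_diff algebra_simps)
    have ex: "exp (- x * (real k * dt)) = exp (- x * dt) ^ k" for x k
      by (simp add: exp_of_nat_mult[symmetric] algebra_simps)
    have "(\<Sum>i = 1..NA. w i * fidr_psi (s i) dt U n)
        = (\<Sum>i = 1..NA. \<Sum>j<m. w i * ((U (Suc j) - U j) * (1 - exp (- s i * dt)) * exp (- s i * dt) ^ (m - j) / (s i * dt)))"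
      unfolding nm psi_closed by (simp add: sum_distrib_left)
    also have "\<dots> = (\<Sum>j<m. \<Sum>i = 1..NA. w i * ((U (Suc j) - U j) * (1 - exp (- s i * dt)) * exp (- s i * dt) ^ (m - j) / (s i * dt)))"
      by (rule sum.swap)
    also have "\<dots> = (\<Sum>j<m. D j * IS j)"
    proof (rule sum.cong[OF refl])
      fix j assume j: "j \<in> {..<m}"
      show "(\<Sum>i = 1..NA. w i * ((U (Suc j) - U j) * (1 - exp (- s i * dt)) * exp (- s i * dt) ^ (m - j) / (s i * dt))) = D j * IS j"
        unfolding IS_def sum_distrib_left
      proof (rule sum.cong[OF refl])
        fix i assume i: "i \<in> {1..NA}"
        have si: "s i > 0" using sw i by auto
        show "w i * ((U (Suc j) - U j) * (1 - exp (- s i * dt)) * exp (- s i * dt) ^ (m - j) / (s i * dt))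
            = D j * (w i * (exp (- s i * (c - b j)) - exp (- s i * (c - a j))) / s i)"
        proof -
          have jm: "j < m" using j by simp
          show ?thesis unfolding eb[OF jm] ea[OF jm] ex Dd power_Suc using si h0
            by (simp add: field_simps)
        qed
      qed
    qed
    finally show ?thesis .
  qed
  have fidrG: "G1 * fidr \<alpha> dt NA s w U n = D m * IK m + (\<Sum>j<m. D j * IS j)"
    unfolding fidr_def G1_def[symmetric] using part1 part2 G1 by (simp add: distrib_left)
  have RG: "G1 * (caputo \<alpha> du (real n * dt) - fidr \<alpha> dt NA s w U n)
      = (\<Sum>j<n. E j) + (\<Sum>j<m. D j * (IK j - IS j))"
    using capG fidrG by (simp add: right_diff_distrib nm sum_subtractf)
  have hist_term: "\<bar>D j * (IK j - IS j)\<bar> \<le> B1 * (\<epsilon>0 * dt)" if jm: "j < m" for j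
  proof -
    have bm: "b j \<le> real m * dt" using jm h0 by (simp add: b_def mult_right_mono)
    have a0: "0 \<le> a j" using h0 by (simp add: a_def)
    have subc: "{a j..b j} \<subseteq> {0..c}" using sub[of j] jm nm by simp
    have Dj: "\<bar>D j\<bar> \<le> B1"
    proof -
      have "continuous_on {a j..b j} u" by (rule continuous_on_subset[OF cu subc])
      moreover have "(u has_derivative (*) (du x)) (at x)" if "a j < x" "x < b j" for x
        using du1a[of x] that a0 subc ab[of j] by (auto simp: has_field_derivative_def)
      ultimately obtain \<xi> where xi: "a j < \<xi>" "\<xi> < b j" "u (b j) - u (a j) = du \<xi> * (b j - a j)"
        using mvt[OF ab[of j], of u "\<lambda>x. (*) (du x)"] by metis
      then have "D j = du \<xi>" unfolding D_def using ab[of j] by simp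
      moreover have "\<bar>du \<xi>\<bar> \<le> B1" using B1b[of \<xi>] xi a0 bm by simp
      ultimately show ?thesis by simp
    qed
    have IKi: "(K has_integral IK j) {a j..b j}"
      unfolding IK_def by (rule integrable_integral, rule integrable_on_subinterval[OF Kint' subc])
    have ISi: "((\<lambda>\<tau>. \<Sum>i = 1..NA. w i * exp (- s i * (c - \<tau>))) has_integral IS j) {a j..b j}"
      unfolding IS_def
    proof (rule has_integral_sum)
      fix i assume i: "i \<in> {1..NA}"
      have si: "s i > 0" using sw i by auto
      from has_integral_mult_right[OF exp_integral[OF si less_imp_le[OF ab[of j]], of c], of "w i"]
      show "((\<lambda>\<tau>. w i * exp (- s i * (c - \<tau>))) has_integral
              w i * (exp (- s i * (c - b j)) - exp (- s i * (c - a j))) / s i) {a j..b j}"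
        by simp
    qed simp
    have "norm (IK j - IS j) \<le> \<epsilon>0 * measure lborel {a j..b j}"
    proof (rule has_integral_bound_real[OF e0 finite.emptyI has_integral_diff[OF IKi ISi]])
      fix \<tau> assume t: "\<tau> \<in> {a j..b j} - {}"
      have "c - b j = real (m - j) * dt" using jm by (simp add: c_def b_def nm of_nat_diff algebra_simps)
      moreover have "1 \<le> real (m - j)" using jm by simp
      ultimately have "dt \<le> c - b j" using h0 mult_right_mono[of 1 "real (m - j)" dt] by simp
      then have "c - \<tau> \<in> {dt..T}" using t cT a0 by auto
      then show "norm (K \<tau> - (\<Sum>i = 1..NA. w i * exp (- s i * (c - \<tau>)))) \<le> \<epsilon>0"
        using apx unfolding K_def by auto
    qed
    then have "\<bar>IK j - IS j\<bar> \<le> \<epsilon>0 * dt" using ab[of j] ba[of j] by simp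
    then show ?thesis unfolding abs_mult using Dj by (intro mult_mono) auto
  qed
  have hist: "\<bar>\<Sum>j<m. D j * (IK j - IS j)\<bar> \<le> real m * dt * \<epsilon>0 * B1"
  proof -
    have "\<bar>\<Sum>j<m. D j * (IK j - IS j)\<bar> \<le> (\<Sum>j<m. \<bar>D j * (IK j - IS j)\<bar>)" by (rule sum_abs)
    also have "\<dots> \<le> (\<Sum>j<m. B1 * (\<epsilon>0 * dt))" by (rule sum_mono) (simp add: hist_term)
    finally show ?thesis by (simp add: algebra_simps)
  qed
  have Ebound: "\<bar>E j\<bar> \<le> M / 2 * \<alpha> * Jv"
    if jn: "j < n" and Jv: "((\<lambda>\<tau>. (\<tau> - a j) * (b j - \<tau>) * (c - \<tau>) powr (- \<alpha> - 1)) has_integral Jv) {a j..b j}"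
    for j Jv
  proof -
    have subc: "{a j..b j} \<subseteq> {0..c}" by (rule sub[OF jn])
    have bc: "b j \<le> c" using subc ab[of j] by auto
    have a0: "0 \<le> a j" using subc ab[of j] by auto
    have i1: "(\<lambda>\<tau>. du \<tau> * K \<tau>) integrable_on {a j..b j}"
      by (rule integrable_on_subinterval[OF duKint subc])
    have i2: "K integrable_on {a j..b j}"
      by (rule integrable_on_subinterval[OF Kint' subc])
    have "(\<lambda>\<tau>. du \<tau> * K \<tau> - D j * K \<tau>) integrable_on {a j..b j}"
      by (rule integrable_diff[OF i1 integrable_on_mult_right[OF i2]])
    then have int: "(\<lambda>\<tau>. (du \<tau> - (u (b j) - u (a j)) / (b j - a j)) * (c - \<tau>) powr (- \<alpha>)) integrable_on {a j..b j}"
      by (simp add: D_def K_def algebra_simps)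
    have "\<bar>integral {a j..b j} (\<lambda>\<tau>. (du \<tau> - (u (b j) - u (a j)) / (b j - a j)) * (c - \<tau>) powr (- \<alpha>))\<bar>
           \<le> M / 2 * \<alpha> * Jv"
    proof (rule core[OF al ab[of j] bc])
      show "continuous_on {a j..b j} u" by (rule continuous_on_subset[OF cu subc])
      show "continuous_on {a j..b j} du" by (rule continuous_on_subset[OF cdu subc])
      show "(u has_real_derivative du x) (at x)" if "a j < x" "x < b j" for x
        using du1a[of x] that a0 bc by auto
      show "(du has_real_derivative ddu x) (at x)" if "a j < x" "x < b j" for x
        using du2a[of x] that a0 bc by auto
      show "\<bar>ddu x\<bar> \<le> M" if "a j < x" "x < b j" for x
        using Mb[of x] that a0 bc by auto
    qed (rule int, rule Jv)
    then show ?thesis by (simp add: E_def D_def K_def)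
  qed
  define r where "r = dt powr \<alpha>"
  have r0: "0 < r" using h0 by (simp add: r_def)
  define Cp where "Cp = 4 / 2 powr \<alpha> / (2 - \<alpha>) - 1 - 1 / 2 powr \<alpha>"
  have cid: "\<alpha> / 2 * (1 / ((1 - \<alpha>) * (2 - \<alpha>)) + v1c \<alpha>) = Cp / (1 - \<alpha>)"
    unfolding Cp_def by (rule const_id[OF al])
  have v1pos: "0 \<le> v1c \<alpha>"
  proof -
    have "0 \<le> (1::real) ^ 2 / 1 powr \<alpha> * v1c \<alpha>"
    proof (rule has_integral_nonneg[OF J1_integral[OF al, of 1 0]])
      fix x :: real assume "x \<in> {0..0 + 1}"
      then show "0 \<le> (x - 0) * ((0 + 1) - x) * ((0 + 2 * 1) - x) powr (- \<alpha> - 1)" by simp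
    qed simp
    then show ?thesis by simp
  qed
  have Elast: "\<bar>E m\<bar> \<le> M / 2 * \<alpha> * (dt ^ 2 / r / ((1 - \<alpha>) * (2 - \<alpha>)))"
  proof -
    have bmc: "b m = c" using cbm by simp
    have "((\<lambda>\<tau>. (\<tau> - a m) * (b m - \<tau>) * (c - \<tau>) powr (- \<alpha> - 1)) has_integral
           dt ^ 2 / r / ((1 - \<alpha>) * (2 - \<alpha>))) {a m..b m}"
      using J0_integral[OF al ab[of m]] unfolding bmc[symmetric] ba powr_forms(3)[OF h0] r_def .
    from Ebound[OF _ this] show ?thesis using nm by simp
  qed
  have Etot: "\<bar>\<Sum>j<n. E j\<bar> \<le> M * (dt ^ 2 / r * (Cp / (1 - \<alpha>) + 1 / 12))"
  proof (cases m)
    case 0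
    have X0: "0 \<le> 1 / ((1 - \<alpha>) * (2 - \<alpha>))" using al by simp
    have "\<alpha> / 2 * (1 / ((1 - \<alpha>) * (2 - \<alpha>))) \<le> Cp / (1 - \<alpha>)"
      using cid v1pos al by (smt (verit) mult_left_mono divide_nonneg_nonneg)
    then have "\<alpha> / 2 * (1 / ((1 - \<alpha>) * (2 - \<alpha>))) \<le> Cp / (1 - \<alpha>) + 1 / 12" by simp
    then have "dt ^ 2 / r * (\<alpha> / 2 * (1 / ((1 - \<alpha>) * (2 - \<alpha>)))) \<le> dt ^ 2 / r * (Cp / (1 - \<alpha>) + 1 / 12)"
      using r0 by (intro mult_left_mono) auto
    then have "M * (dt ^ 2 / r * (\<alpha> / 2 * (1 / ((1 - \<alpha>) * (2 - \<alpha>))))) \<le> M * (dt ^ 2 / r * (Cp / (1 - \<alpha>) + 1 / 12))"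
      using M0 by (rule mult_left_mono)
    moreover have "M / 2 * \<alpha> * (dt ^ 2 / r / ((1 - \<alpha>) * (2 - \<alpha>))) = M * (dt ^ 2 / r * (\<alpha> / 2 * (1 / ((1 - \<alpha>) * (2 - \<alpha>)))))"
      by (simp add: mult_ac)
    ultimately show ?thesis using Elast nm 0 by simp
  next
    case (Suc p)
    have Ep: "\<bar>E p\<bar> \<le> M / 2 * \<alpha> * (dt ^ 2 / r * v1c \<alpha>)"
    proof -
      have e1: "b p = a p + dt" and e2: "c = a p + 2 * dt"
        by (simp_all add: a_def b_def c_def nm Suc algebra_simps)
      have "((\<lambda>\<tau>. (\<tau> - a p) * (b p - \<tau>) * (c - \<tau>) powr (- \<alpha> - 1)) has_integral
             dt ^ 2 / r * v1c \<alpha>) {a p..b p}"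
        unfolding e1 e2 r_def by (rule J1_integral[OF al h0])
      from Ebound[OF _ this] show ?thesis using nm Suc by simp
    qed
    have Ej: "\<bar>E j\<bar> \<le> M * (dt ^ 2 / r) / 12 * (\<alpha> * (real (p - Suc j) + 2) powr (- \<alpha> - 1))"
      if jp: "j < p" for j
    proof -
      have cb: "c - b j = (real (p - Suc j) + 2) * dt"
        using jp by (simp add: c_def b_def nm Suc of_nat_diff algebra_simps)
      have bc: "b j < c" using cb h0 by (smt (verit) of_nat_0_le_iff mult_pos_pos)
      note J3 = J3_bound[OF al ab[of j] bc]
      have "\<bar>E j\<bar> \<le> M / 2 * \<alpha> * integral {a j..b j} (\<lambda>\<tau>. (\<tau> - a j) * (b j - \<tau>) * (c - \<tau>) powr (- \<alpha> - 1))"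
        by (rule Ebound) (use jp nm Suc J3(1) in auto)
      also have "\<dots> \<le> M / 2 * \<alpha> * ((c - b j) powr (- \<alpha> - 1) * (b j - a j) ^ 3 / 6)"
        using J3(2) M0 al by (intro mult_left_mono) auto
      also have "(c - b j) powr (- \<alpha> - 1) * (b j - a j) ^ 3 / 6
          = (real (p - Suc j) + 2) powr (- \<alpha> - 1) * (dt ^ 2 / r) / 6"
      proof -
        have "(c - b j) powr (- \<alpha> - 1) = (real (p - Suc j) + 2) powr (- \<alpha> - 1) * dt powr (- \<alpha> - 1)"
          unfolding cb using h0 by (simp add: powr_mult)
        then show ?thesis unfolding ba powr_forms(4)[OF h0] r_def[symmetric]
          using h0 r0 by (simp add: field_simps power2_eq_square power3_eq_cube)
      qed
      finally show ?thesis by (simp add: algebra_simps)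
    qed
    have "\<bar>\<Sum>j<n. E j\<bar> \<le> \<bar>\<Sum>j<p. E j\<bar> + \<bar>E p\<bar> + \<bar>E m\<bar>"
      unfolding nm Suc by simp
    also have "\<bar>\<Sum>j<p. E j\<bar> \<le> M * (dt ^ 2 / r) / 12"
    proof -
      have "\<bar>\<Sum>j<p. E j\<bar> \<le> (\<Sum>j<p. \<bar>E j\<bar>)" by (rule sum_abs)
      also have "\<dots> \<le> (\<Sum>j<p. M * (dt ^ 2 / r) / 12 * (\<alpha> * (real (p - Suc j) + 2) powr (- \<alpha> - 1)))"
        by (rule sum_mono, rule Ej) simp
      also have "\<dots> = M * (dt ^ 2 / r) / 12 * (\<Sum>j<p. \<alpha> * (real (p - Suc j) + 2) powr (- \<alpha> - 1))"
        by (simp add: sum_distrib_left)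
      also have "(\<Sum>j<p. \<alpha> * (real (p - Suc j) + 2) powr (- \<alpha> - 1)) = (\<Sum>j<p. \<alpha> * (real j + 2) powr (- \<alpha> - 1))"
        by (rule sum.nat_diff_reindex)
      also have "M * (dt ^ 2 / r) / 12 * (\<Sum>j<p. \<alpha> * (real j + 2) powr (- \<alpha> - 1)) \<le> M * (dt ^ 2 / r) / 12 * 1"
        using tail_sum1[OF al(1), of p] M0 r0 by (intro mult_left_mono) auto
      finally show ?thesis by simp
    qed
    finally have "\<bar>\<Sum>j<n. E j\<bar> \<le> M * (dt ^ 2 / r) / 12 + M / 2 * \<alpha> * (dt ^ 2 / r * v1c \<alpha>)
        + M / 2 * \<alpha> * (dt ^ 2 / r / ((1 - \<alpha>) * (2 - \<alpha>)))"
      using Ep Elast by simp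
    also have "\<dots> = M * (dt ^ 2 / r * (\<alpha> / 2 * (1 / ((1 - \<alpha>) * (2 - \<alpha>)) + v1c \<alpha>) + 1 / 12))"
      by (simp add: algebra_simps)
    finally show ?thesis unfolding cid .
  qed
  have Ueq: "(\<lambda>k. u (real k * dt)) = U" by (rule ext) (simp add: U_def)
  define R where "R = caputo \<alpha> du (real n * dt) - fidr \<alpha> dt NA s w U n"
  have "\<bar>G1 * R\<bar> \<le> \<bar>\<Sum>j<n. E j\<bar> + \<bar>\<Sum>j<m. D j * (IK j - IS j)\<bar>"
    unfolding R_def RG by (rule abs_triangle_ineq)
  also have "\<dots> \<le> M * (dt ^ 2 / r * (Cp / (1 - \<alpha>) + 1 / 12)) + real m * dt * \<epsilon>0 * B1"
    using Etot hist by (rule add_mono)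
  finally have GR: "G1 * \<bar>R\<bar> \<le> M * (dt ^ 2 / r * (Cp / (1 - \<alpha>) + 1 / 12)) + real m * dt * \<epsilon>0 * B1"
    using G1 by (simp add: abs_mult)
  have two: "(2::real) powr (2 - \<alpha>) = 4 / 2 powr \<alpha>" "(2::real) powr (- \<alpha>) = 1 / 2 powr \<alpha>"
    using powr_forms(3)[of 2 \<alpha>] powr_forms(1)[of 2 \<alpha>] by simp_all
  have dtp: "dt powr (2 - \<alpha>) = dt ^ 2 / r" using powr_forms(3)[OF h0] by (simp add: r_def)
  have n1: "1 - \<alpha> \<noteq> 0" using al by simp
  have "\<bar>R\<bar> \<le> (M * (dt ^ 2 / r * (Cp / (1 - \<alpha>) + 1 / 12)) + real m * dt * \<epsilon>0 * B1) / G1"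
    using GR G1 by (simp add: field_simps)
  also have "\<dots> = dt powr (2 - \<alpha>) / Gamma (2 - \<alpha>)
        * ((1 - \<alpha>) / 12 + 2 powr (2 - \<alpha>) / (2 - \<alpha>) - (1 + 2 powr (- \<alpha>))) * M
      + \<epsilon>0 * (real (n - 1) * dt) / Gamma (1 - \<alpha>) * B1"
    unfolding G2 two dtp G1_def[symmetric] Cp_def nm using G1 n1 r0
    by (simp add: field_simps)
  finally show ?thesis unfolding R_def Ueq M_def B1_def .
qed

end
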